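(* Let $p\ge 5$ be a prime and $n,k\in\mathbb{N}$ with $n>k$. Then for $1\le j\le \frac{p-1}{2}$, \[ \binom{2kp+2j}{kp+j}\binom{2np-2kp-2j}{np-kp-j}\equiv \frac{2p}{j}\binom{2k}{k}\binom{2n-2k-2}{n-k-1}(2k+1-2n)\pmod{p^2}, \] and for $\frac{p+1}{2}\le j\le p-1$, \[ \binom{2kp+2j}{kp+j}\binom{2np-2kp-2j}{np-kp-j}\equiv \frac{2p}{j}\binom{2k}{k}\binom{2n-2k-2}{n-k-1}(2k+1)\pmod{p^2}. \]
   Context: For rationals $a,b$, $a\equiv b\pmod{p^m}$ means $(a-b)/p^m$ is a rational number whose denominator is not divisible by $p$. *)

theory Defs
  imports Complex_Main "HOL-Computational_Algebra.Primes"
begin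

definition rat_cong :: "rat \<Rightarrow> rat \<Rightarrow> int \<Rightarrow> nat \<Rightarrow> bool" where
  "rat_cong a b p m \<longleftrightarrow> \<not> p dvd snd (quotient_of ((a - b) / of_int (p ^ m)))"

end

theory Submission
  imports Defs "HOL-Number_Theory.Number_Theory"
begin


definition U :: "nat \<Rightarrow> nat \<Rightarrow> nat" where
  "U p x = prod (\<lambda>i. i) {i \<in> {1..x}. \<not> p dvd i}"

lemma U_0[simp]: "U p 0 = 1" by (simp add: U_def)

lemma U_Suc: "U p (Suc x) = (if p dvd Suc x then U p x else Suc x * U p x)"
proof -
  have "{i \<in> {1..Suc x}. \<not> p dvd i} = (if p dvd Suc x then {i \<in> {1..x}. \<not> p dvd i} else insert (Suc x) {i \<in> {1..x}. \<not> p dvd i})"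
    by (auto simp: le_Suc_eq)
  then show ?thesis by (simp add: U_def)
qed

lemma div_Suc_cases:
  assumes "p > (0::nat)"
  shows "Suc x div p = (if p dvd Suc x then Suc (x div p) else x div p)"
    and "\<not> p dvd Suc x \<Longrightarrow> Suc x mod p = Suc (x mod p)"
    and "p dvd Suc x \<Longrightarrow> x mod p = p - 1"
proof -
  show "Suc x div p = (if p dvd Suc x then Suc (x div p) else x div p)"
    using assms by (simp add: div_Suc mod_0_imp_dvd)
  show "\<not> p dvd Suc x \<Longrightarrow> Suc x mod p = Suc (x mod p)"
    using assms by (simp add: mod_Suc) (metis mod_Suc dvd_eq_mod_eq_0)
  show "p dvd Suc x \<Longrightarrow> x mod p = p - 1"
    using assms by (metis mod_Suc dvd_eq_mod_eq_0 nat.distinct(1) diff_Suc_1 mod_less_divisor)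
qed

lemma U_fact:
  assumes "p > 0"
  shows "fact x = p^(x div p) * fact (x div p) * U p x"
proof (induction x)
  case 0 then show ?case by simp
next
  case (Suc x)
  show ?case
  proof (cases "p dvd Suc x")
    case True
    have q: "Suc x div p = Suc (x div p)" using True div_Suc_cases(1)[OF assms, of x] by simp
    have s: "Suc x = p * Suc (x div p)" using True q
      by (metis dvd_mult_div_cancel)
    have u: "U p (Suc x) = U p x" using True by (simp add: U_Suc)
    have "(fact (Suc x)::nat) = Suc x * fact x" by simp
    also have "\<dots> = (p * Suc (x div p)) * (p^(x div p) * fact (x div p) * U p x)"
      using Suc s by simp
    also have "\<dots> = p^(Suc (x div p)) * fact (Suc (x div p)) * U p x"
      by (simp only: fact_Suc power_Suc of_nat_id) (simp add: algebra_simps)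
    finally show ?thesis using q u by simp
  next
    case False
    then show ?thesis using Suc div_Suc_cases(1)[OF assms, of x]
      by (simp add: U_Suc algebra_simps)
  qed
qed

lemma U_coprime:
  assumes "prime p"
  shows "\<not> p dvd U p x"
  unfolding U_def
  using assms by (subst prime_dvd_prod_iff) auto

lemma U_mod:
  assumes "prime p"
  shows "[int (U p x) = (-1)^(x div p) * fact (x mod p)] (mod int p)"
proof (induction x)
  case 0 then show ?case by simp
next
  case (Suc x)
  have p0: "p > 0" using assms prime_gt_0_nat by blast
  show ?case
  proof (cases "p dvd Suc x")
    case True
    have q: "Suc x div p = Suc (x div p)" using True div_Suc_cases(1)[OF p0, of x] by simp
    have r: "x mod p = p - 1" using div_Suc_cases(3)[OF p0 True] .
    have r0: "Suc x mod p = 0" using True by simp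
    have u: "U p (Suc x) = U p x" using True by (simp add: U_Suc)
    have w: "[(-1)^(x div p) * fact (p - 1) = (-1)^(x div p) * (- 1::int)] (mod int p)"
      using wilson_theorem[OF assms] by (rule cong_scalar_left)
    have g: "(-1::int)^(Suc x div p) * fact (Suc x mod p) = (-1)^(x div p) * (-1)"
      unfolding q r0 by simp
    have "[int (U p x) = (-1)^(x div p) * fact (p - 1)] (mod int p)" using Suc r by simp
    then have "[int (U p x) = (-1)^(x div p) * (-1::int)] (mod int p)" using w by (rule cong_trans)
    then show ?thesis unfolding u g .
  next
    case False
    have q: "Suc x div p = x div p" using False div_Suc_cases(1)[OF p0, of x] by simp
    have r: "Suc x mod p = Suc (x mod p)" using div_Suc_cases(2)[OF p0 False] .
    have u: "U p (Suc x) = Suc x * U p x" using False by (simp add: U_Suc)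
    have c1: "[int (Suc x) = int (Suc (x mod p))] (mod int p)"
      using r by (metis cong_def of_nat_mod cong_int_iff mod_mod_trivial)
    have "[int (Suc x) * int (U p x) = int (Suc (x mod p)) * ((-1)^(x div p) * fact (x mod p))] (mod int p)"
      using c1 Suc by (rule cong_mult)
    moreover have "int (Suc (x mod p)) * ((-1)^(x div p) * fact (x mod p)) = (-1::int)^(Suc x div p) * fact (Suc x mod p)"
      unfolding q r by (simp only: fact_Suc mult.assoc mult.left_commute)
    ultimately show ?thesis unfolding u of_nat_mult by metis
  qed
qed

lemma refl_wilson:
  assumes "prime p" "t < p"
  shows "[fact t * fact (p - 1 - t) * (-1)^t = (fact (p - 1) :: int)] (mod int p)"
  using assms(2)
proof (induction t)
  case 0 then show ?case by simp
next
  case (Suc t)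
  have e: "p - 1 - t = Suc (p - 1 - Suc t)" using Suc by auto
  have i: "int (p - 1 - t) = int p - (int (Suc t))" using Suc(2) by linarith
  have c: "[int (p - 1 - t) = - int (Suc t)] (mod int p)"
    unfolding i cong_iff_dvd_diff by simp
  have f: "(fact (p - 1 - t) :: int) = int (p - 1 - t) * fact (p - 1 - Suc t)"
    by (metis e fact_Suc e of_nat_Suc diff_Suc_1)
  have "[fact t * fact (p - 1 - t) * (-1)^t = fact t * (- int (Suc t) * fact (p - 1 - Suc t)) * (-1::int)^t] (mod int p)"
    unfolding f by (intro cong_mult cong_refl c)
  then have "[fact (Suc t) * fact (p - 1 - Suc t) * (-1)^(Suc t) = (fact t * fact (p - 1 - t) * (-1)^t :: int)] (mod int p)"
    by (simp add: algebra_simps cong_sym)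
  then show ?case using Suc by (meson cong_trans Suc_lessD)
qed


lemma sq_sign: "((-1::int)^k * a)^2 = a^2"
  by (simp add: power_mult_distrib flip: power_mult)

lemma W_cong:
  assumes "prime p" "1 \<le> j" "j < p"
  shows "[(fact j * fact (p - j))^2 = (int j)^2] (mod int p)"
proof -
  have e: "p - 1 - (j - 1) = p - j" using assms by auto
  have r0: "[fact (j-1) * fact (p - 1 - (j-1)) * (-1)^(j-1) = (fact (p - 1) :: int)] (mod int p)"
    using refl_wilson[OF assms(1), of "j-1"] assms by simp
  have r: "[fact (j-1) * fact (p - j) * (-1)^(j-1) = (-1::int)] (mod int p)"
    using cong_trans[OF r0 wilson_theorem[OF assms(1)]] unfolding e .
  have "[(fact (j-1) * fact (p - j) * (-1)^(j-1))^2 = (-1::int)^2] (mod int p)"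
    using r by (rule cong_pow)
  moreover have "(fact (j-1) * fact (p - j) * (-1::int)^(j-1))^2 = (fact (j-1) * fact (p - j))^2"
    using sq_sign[of "j-1" "fact (j-1) * fact (p - j)"] by (simp only: mult.commute)
  ultimately have "[(fact (j-1) * fact (p - j))^2 = (1::int)] (mod int p)" by simp
  then have "[(int j)^2 * (fact (j-1) * fact (p - j))^2 = (int j)^2 * (1::int)] (mod int p)"
    by (rule cong_scalar_left)
  moreover have "(fact j :: int) = int j * fact (j - 1)" using assms fact_reduce[of j] by simp
  ultimately show ?thesis by (simp add: power_mult_distrib mult.assoc)
qed

lemma generic_div:
  fixes A B W D V c j :: int
  assumes "prime p" "\<not> int p dvd W" "A*B*W = int p*D*V" "int p dvd (j*V - c*W)"
  shows "(int p)^2 dvd (j*A*B - c*int p*D)"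
proof -
  have "W*(j*A*B - c*int p*D) = int p * D * (j*V - c*W)"
    using assms(3) by (simp add: algebra_simps)
  moreover have "(int p)^2 dvd int p * D * (j*V - c*W)"
    using assms(4) by (auto simp: power2_eq_square intro!: mult_dvd_mono)
  ultimately have "(int p)^2 dvd W*(j*A*B - c*int p*D)" by simp
  moreover have "coprime ((int p)^2) W"
    using assms(1,2) by (simp add: prime_imp_coprime prime_nat_int_transfer)
  ultimately show ?thesis using coprime_dvd_mult_right_iff by blast
qed

lemma rat_generic:
  fixes L D c :: int and p j :: nat
  assumes "prime p" "0 < j" "j < p" "(int p)^2 dvd (int j*L - c*int p*D)"
  shows "rat_cong (of_int L) (of_int c * of_nat p / of_nat j * of_int D) (int p) 2"
proof -
  obtain z where z: "int j*L - c*int p*D = (int p)^2 * z" using assms(4) by blast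
  have eq: "(of_int L - of_int c * of_nat p / of_nat j * of_int D) / of_int (int p ^ 2) = (of_int z / of_int (int j) :: rat)"
  proof -
    have "(of_int (int j*L - c*int p*D) :: rat) = of_int ((int p)^2 * z)" using z by simp
    then have "(of_nat j * of_int L - of_int c * of_nat p * of_int D :: rat) = (of_nat p)^2 * of_int z" by simp
    then show ?thesis using assms(2,3) by (simp add: field_simps)
  qed
  obtain a b where ab: "quotient_of (of_int z / of_int (int j)) = (a, b)" by (cases "quotient_of (of_int z / of_int (int j))") auto
  have "of_int z / of_int (int j) = (of_int a / of_int b :: rat)" using quotient_of_div[OF ab] .
  moreover have b0: "b > 0" using quotient_of_denom_pos[OF ab] .
  ultimately have "of_int z * of_int b = (of_int a * of_int (int j) :: rat)" using assms(2)
    by (simp add: field_simps)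
  then have "z * b = a * int j" by (metis of_int_eq_iff of_int_mult)
  then have "b dvd a * int j" by (metis dvd_triv_right)
  moreover have "coprime b a" using quotient_of_coprime[OF ab] by (simp add: coprime_commute)
  ultimately have bj: "b dvd int j" using coprime_dvd_mult_right_iff by blast
  have "\<not> int p dvd int j" using assms(2,3) by (simp add: nat_dvd_not_less)
  then have "\<not> int p dvd b" using bj dvd_trans by blast
  then show ?thesis unfolding rat_cong_def eq ab by simp
qed


lemma fact_split2:
  "fact (2*k) = fact k * fact k * ((2*k) choose k)"
  using binomial_fact_lemma[of k "2*k"] by (simp add: mult_2)

lemma case1:
  fixes p k q j :: nat
  assumes pr: "prime p" and j1: "1 \<le> j" and j2: "2*j < p"
  shows "(int p)^2 dvd int j * (int ((2*k*p+2*j) choose (k*p+j)) * int (((p-2*j) + p*(2*q+1)) choose ((p-j)+p*q)))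
           - (-2) * int p * (int ((2*k) choose k) * int ((2*q) choose q) * int (2*q+1))"
proof -
  have p0: "p > 0" using pr prime_gt_0_nat by blast
  define A where "A = (2*k*p+2*j) choose (k*p+j)"
  define B where "B = ((p-2*j) + p*(2*q+1)) choose ((p-j)+p*q)"
  define C1 where "C1 = (2*k) choose k"
  define C2 where "C2 = (2*q) choose q"
  define x1 where "x1 = 2*j + p*(2*k)"
  define y1 where "y1 = j + p*k"
  define x2 where "x2 = (p-2*j) + p*(2*q+1)"
  define y2 where "y2 = (p-j) + p*q"
  have A': "A = x1 choose y1" unfolding A_def x1_def y1_def by (simp add: algebra_simps)
  have B': "B = x2 choose y2" unfolding B_def x2_def y2_def ..
  have x1d: "x1 div p = 2*k" "x1 mod p = 2*j" unfolding x1_def using j2 by simp_all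
  have y1d: "y1 div p = k" "y1 mod p = j" unfolding y1_def using j2 by simp_all
  have pn0: "p \<noteq> 0" using p0 by simp
  have lt1: "p - 2*j < p" and lt2: "p - j < p" using j1 j2 by simp_all
  have x2d: "x2 div p = 2*q+1" "x2 mod p = p-2*j"
    unfolding x2_def div_mult_self2[OF pn0] mod_mult_self2 div_less[OF lt1] mod_less[OF lt1] by simp_all
  have y2d: "y2 div p = q" "y2 mod p = p-j"
    unfolding y2_def div_mult_self2[OF pn0] mod_mult_self2 div_less[OF lt2] mod_less[OF lt2] by simp_all
  have xy1: "x1 = 2*y1" unfolding x1_def y1_def by simp
  have xy2: "x2 = 2*y2" unfolding x2_def y2_def using j2 by (simp add: algebra_simps)
  define U1 U2 U3 U4 where "U1 = U p y1" and "U2 = U p x1" and "U3 = U p y2" and "U4 = U p x2"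
  have "fact y1 * fact (x1 - y1) * A = fact x1" unfolding A' using binomial_fact_lemma[of y1 x1] xy1 by simp
  then have "fact y1 * fact y1 * A = (fact x1 :: nat)" using xy1 by simp
  then have "(p^k*fact k*U1) * (p^k*fact k*U1) * A = p^(2*k) * (fact k * fact k * C1) * U2"
    using U_fact[OF p0, of y1] U_fact[OF p0, of x1] x1d y1d fact_split2[of k]
    unfolding U1_def U2_def C1_def by simp
  moreover have pk: "p^(2*k) = p^k*p^k" by (simp add: mult_2 power_add)
  ultimately have "(p^k*fact k*p^k*fact k) * (U1*U1*A) = (p^k*fact k*p^k*fact k) * (C1*U2)"
    unfolding pk by (simp add: algebra_simps)
  then have Aid: "U1*U1*A = C1*U2" using p0 by (simp del: mult_cancel_left1 mult_cancel_left2) 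
  have "fact y2 * fact (x2 - y2) * B = fact x2" unfolding B' using binomial_fact_lemma[of y2 x2] xy2 by simp
  then have "fact y2 * fact y2 * B = (fact x2 :: nat)" using xy2 by simp
  moreover have "(fact (2*q+1) :: nat) = (2*q+1) * (fact q * fact q * C2)"
    using fact_split2[of q] unfolding C2_def by simp
  ultimately have "(p^q*fact q*U3) * (p^q*fact q*U3) * B = p^(2*q+1) * ((2*q+1) * (fact q * fact q * C2)) * U4"
    using U_fact[OF p0, of y2] U_fact[OF p0, of x2] x2d y2d
    unfolding U3_def U4_def by simp
  moreover have pq: "p^(2*q+1) = p*(p^q*p^q)" by (simp add: mult_2 power_add)
  ultimately have "(p^q*fact q*p^q*fact q) * (U3*U3*B) = (p^q*fact q*p^q*fact q) * (p*(2*q+1)*C2*U4)"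
    unfolding pq by (simp add: algebra_simps)
  then have Bid: "U3*U3*B = p*(2*q+1)*C2*U4" using p0 by simp
  define W where "W = int U1 * int U1 * int U3 * int U3"
  define V where "V = int U2 * int U4"
  define D where "D = int C1 * int C2 * int (2*q+1)"
  have main: "int A * int B * W = int p * D * V"
  proof -
    have "int A * int B * W = int (U1*U1*A) * int (U3*U3*B)" unfolding W_def by (simp add: algebra_simps)
    also have "\<dots> = int (C1*U2) * int (p*(2*q+1)*C2*U4)" using Aid Bid by simp
    finally show ?thesis unfolding D_def V_def by (simp add: algebra_simps)
  qed
  have Wnd: "\<not> int p dvd W"
    using U_coprime[OF pr] pr unfolding W_def U1_def U3_def
    by (metis int_dvd_int_iff of_nat_mult prime_dvd_mult_iff)
  have c1: "[int U1 = (-1)^k * fact j] (mod int p)" using U_mod[OF pr, of y1] y1d unfolding U1_def by simp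
  have c3: "[int U3 = (-1)^q * fact (p-j)] (mod int p)" using U_mod[OF pr, of y2] y2d unfolding U3_def by simp
  have c2: "[int U2 = fact (2*j)] (mod int p)" using U_mod[OF pr, of x1] x1d unfolding U2_def by simp
  have c4: "[int U4 = - fact (p-2*j)] (mod int p)" using U_mod[OF pr, of x2] x2d unfolding U4_def by simp
  have "[W = ((-1)^k * fact j) * ((-1)^k * fact j) * ((-1)^q * fact (p-j)) * ((-1)^q * fact (p-j))] (mod int p)"
    unfolding W_def by (intro cong_mult c1 c3)
  moreover have "((-1::int)^k * fact j) * ((-1)^k * fact j) * ((-1)^q * fact (p-j)) * ((-1)^q * fact (p-j))
      = (fact j * fact (p - j))^2"
    using sq_sign[of k "fact j"] sq_sign[of q "fact (p-j)"]
    by (simp add: power2_eq_square algebra_simps)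
  ultimately have "[W = (fact j * fact (p - j))^2] (mod int p)" by simp
  then have cW: "[W = (int j)^2] (mod int p)" using W_cong[OF pr j1] j2 cong_trans by fastforce
  have rw0: "[fact (2*j-1) * fact (p - 1 - (2*j-1)) * (-1)^(2*j-1) = (fact (p - 1) :: int)] (mod int p)"
    using refl_wilson[OF pr, of "2*j-1"] j2 by simp
  have e1: "p - 1 - (2*j-1) = p - 2*j" using j1 j2 by simp
  have e2: "(-1::int)^(2*j-1) = -1" using j1 by (simp add: odd_pos)
  have "[fact (2*j-1) * fact (p - 2*j) * (-1) = (-1::int)] (mod int p)"
    using cong_trans[OF rw0 wilson_theorem[OF pr]] unfolding e1 e2 .
  then have "[fact (2*j-1) * fact (p - 2*j) = (1::int)] (mod int p)"
    by (metis cong_minus_minus_iff mult_minus1_right)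
  then have "[int (2*j) * (fact (2*j-1) * fact (p - 2*j)) = int (2*j) * (1::int)] (mod int p)"
    by (rule cong_scalar_left)
  moreover have "(fact (2*j) :: int) = int (2*j) * fact (2*j-1)" using j1 fact_reduce[of "2*j"] by simp
  ultimately have f2: "[fact (2*j) * fact (p - 2*j) = int (2*j)] (mod int p)" by (simp add: mult.assoc)
  have "[V = fact (2*j) * (- fact (p-2*j))] (mod int p)" unfolding V_def by (intro cong_mult c2 c4)
  then have cV: "[V = - int (2*j)] (mod int p)" using f2
    by (metis cong_minus_minus_iff cong_trans mult_minus_right)
  have "[int j * V - (-2) * W = int j * (- int (2*j)) - (-2) * (int j)^2] (mod int p)"
    by (intro cong_diff cong_mult cong_refl cV cW)
  moreover have "int j * (- int (2*j)) - (-2) * (int j)^2 = 0" by (simp add: power2_eq_square)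
  ultimately have "int p dvd (int j * V - (-2) * W)" by (simp add: cong_0_iff)
  then have "(int p)^2 dvd (int j * int A * int B - (-2) * int p * D)"
    by (rule generic_div[OF pr Wnd main])
  then show ?thesis unfolding A_def B_def C1_def C2_def D_def by (simp add: mult.assoc)
qed

lemma case2:
  fixes p k q j :: nat
  assumes pr: "prime p" and po: "odd p" and j1: "p < 2*j" and j2: "j < p"
  shows "(int p)^2 dvd int j * (int (((2*j-p) + p*(2*k+1)) choose (j+p*k)) * int (((2*p-2*j) + p*(2*q)) choose ((p-j)+p*q)))
           - 2 * int p * (int ((2*k) choose k) * int ((2*q) choose q) * int (2*k+1))"
proof -
  have p0: "p > 0" using pr prime_gt_0_nat by blast
  have pn0: "p \<noteq> 0" using p0 by simp
  define A where "A = ((2*j-p) + p*(2*k+1)) choose (j+p*k)"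
  define B where "B = ((2*p-2*j) + p*(2*q)) choose ((p-j)+p*q)"
  define C1 where "C1 = (2*k) choose k"
  define C2 where "C2 = (2*q) choose q"
  define x1 where "x1 = (2*j-p) + p*(2*k+1)"
  define y1 where "y1 = j + p*k"
  define x2 where "x2 = (2*p-2*j) + p*(2*q)"
  define y2 where "y2 = (p-j) + p*q"
  have A': "A = x1 choose y1" unfolding A_def x1_def y1_def ..
  have B': "B = x2 choose y2" unfolding B_def x2_def y2_def ..
  have lt0: "2*j-p < p" "j < p" "2*p-2*j < p" "p-j < p" using j1 j2 by simp_all
  have x1d: "x1 div p = 2*k+1" "x1 mod p = 2*j-p"
    unfolding x1_def div_mult_self2[OF pn0] mod_mult_self2 div_less[OF lt0(1)] mod_less[OF lt0(1)] by simp_all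
  have y1d: "y1 div p = k" "y1 mod p = j"
    unfolding y1_def div_mult_self2[OF pn0] mod_mult_self2 div_less[OF lt0(2)] mod_less[OF lt0(2)] by simp_all
  have x2d: "x2 div p = 2*q" "x2 mod p = 2*p-2*j"
    unfolding x2_def div_mult_self2[OF pn0] mod_mult_self2 div_less[OF lt0(3)] mod_less[OF lt0(3)] by simp_all
  have y2d: "y2 div p = q" "y2 mod p = p-j"
    unfolding y2_def div_mult_self2[OF pn0] mod_mult_self2 div_less[OF lt0(4)] mod_less[OF lt0(4)] by simp_all
  have xy1: "x1 = 2*y1" unfolding x1_def y1_def using j1 by (simp add: algebra_simps)
  have xy2: "x2 = 2*y2" unfolding x2_def y2_def using j2 by (simp add: algebra_simps)
  define U1 U2 U3 U4 where "U1 = U p y1" and "U2 = U p x1" and "U3 = U p y2" and "U4 = U p x2"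
  have "fact y1 * fact (x1 - y1) * A = fact x1" unfolding A' using binomial_fact_lemma[of y1 x1] xy1 by simp
  then have "fact y1 * fact y1 * A = (fact x1 :: nat)" using xy1 by simp
  moreover have "(fact (2*k+1) :: nat) = (2*k+1) * (fact k * fact k * C1)"
    using fact_split2[of k] unfolding C1_def by simp
  ultimately have "(p^k*fact k*U1) * (p^k*fact k*U1) * A = p^(2*k+1) * ((2*k+1) * (fact k * fact k * C1)) * U2"
    using U_fact[OF p0, of y1] U_fact[OF p0, of x1] x1d y1d
    unfolding U1_def U2_def by simp
  moreover have pk: "p^(2*k+1) = p*(p^k*p^k)" by (simp add: mult_2 power_add)
  ultimately have "(p^k*fact k*p^k*fact k) * (U1*U1*A) = (p^k*fact k*p^k*fact k) * (p*(2*k+1)*C1*U2)"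
    unfolding pk by (simp add: algebra_simps)
  then have Aid: "U1*U1*A = p*(2*k+1)*C1*U2" using p0 by simp
  have "fact y2 * fact (x2 - y2) * B = fact x2" unfolding B' using binomial_fact_lemma[of y2 x2] xy2 by simp
  then have "fact y2 * fact y2 * B = (fact x2 :: nat)" using xy2 by simp
  then have "(p^q*fact q*U3) * (p^q*fact q*U3) * B = p^(2*q) * (fact q * fact q * C2) * U4"
    using U_fact[OF p0, of y2] U_fact[OF p0, of x2] x2d y2d fact_split2[of q]
    unfolding U3_def U4_def C2_def by simp
  moreover have pq: "p^(2*q) = p^q*p^q" by (simp add: mult_2 power_add)
  ultimately have "(p^q*fact q*p^q*fact q) * (U3*U3*B) = (p^q*fact q*p^q*fact q) * (C2*U4)"
    unfolding pq by (simp add: algebra_simps)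
  then have Bid: "U3*U3*B = C2*U4" using p0 by simp
  define W where "W = int U1 * int U1 * int U3 * int U3"
  define V where "V = int U2 * int U4"
  define D where "D = int C1 * int C2 * int (2*k+1)"
  have main: "int A * int B * W = int p * D * V"
  proof -
    have "int A * int B * W = int (U1*U1*A) * int (U3*U3*B)" unfolding W_def by (simp add: algebra_simps)
    also have "\<dots> = int (p*(2*k+1)*C1*U2) * int (C2*U4)" using Aid Bid by simp
    finally show ?thesis unfolding D_def V_def by (simp add: algebra_simps)
  qed
  have Wnd: "\<not> int p dvd W"
    using U_coprime[OF pr] pr unfolding W_def U1_def U3_def
    by (metis int_dvd_int_iff of_nat_mult prime_dvd_mult_iff)
  have c1: "[int U1 = (-1)^k * fact j] (mod int p)" using U_mod[OF pr, of y1] y1d unfolding U1_def by simp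
  have c3: "[int U3 = (-1)^q * fact (p-j)] (mod int p)" using U_mod[OF pr, of y2] y2d unfolding U3_def by simp
  have c2: "[int U2 = - fact (2*j-p)] (mod int p)" using U_mod[OF pr, of x1] x1d unfolding U2_def by simp
  have c4: "[int U4 = fact (2*p-2*j)] (mod int p)" using U_mod[OF pr, of x2] x2d unfolding U4_def by simp
  have "[W = ((-1)^k * fact j) * ((-1)^k * fact j) * ((-1)^q * fact (p-j)) * ((-1)^q * fact (p-j))] (mod int p)"
    unfolding W_def by (intro cong_mult c1 c3)
  moreover have "((-1::int)^k * fact j) * ((-1)^k * fact j) * ((-1)^q * fact (p-j)) * ((-1)^q * fact (p-j))
      = (fact j * fact (p - j))^2"
    using sq_sign[of k "fact j"] sq_sign[of q "fact (p-j)"]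
    by (simp add: power2_eq_square algebra_simps)
  ultimately have "[W = (fact j * fact (p - j))^2] (mod int p)" by simp
  moreover have "1 \<le> j" using j1 by simp
  ultimately have cW: "[W = (int j)^2] (mod int p)" using W_cong[OF pr _ j2] cong_trans by blast
  obtain r where r: "p = 2*r+1" using po oddE by blast
  have t: "2*j - p = 2*(j-r-1) + 1" using j1 r by simp
  have rw0: "[fact (2*j-p) * fact (p - 1 - (2*j-p)) * (-1)^(2*j-p) = (fact (p - 1) :: int)] (mod int p)"
    using refl_wilson[OF pr lt0(1)] .
  have e1: "p - 1 - (2*j-p) = 2*p-2*j-1" using j1 j2 by simp
  have e2: "(-1::int)^(2*j-p) = -1" unfolding t by simp
  have "[fact (2*j-p) * fact (2*p-2*j-1) * (-1) = (-1::int)] (mod int p)"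
    using cong_trans[OF rw0 wilson_theorem[OF pr]] unfolding e1 e2 .
  then have "[fact (2*j-p) * fact (2*p-2*j-1) = (1::int)] (mod int p)"
    by (metis cong_minus_minus_iff mult_minus1_right)
  then have "[int (2*p-2*j) * (fact (2*j-p) * fact (2*p-2*j-1)) = int (2*p-2*j) * (1::int)] (mod int p)"
    by (rule cong_scalar_left)
  moreover have "(fact (2*p-2*j) :: int) = int (2*p-2*j) * fact (2*p-2*j-1)" using j2 fact_reduce[of "2*p-2*j"] by (simp del: of_nat_diff)
  moreover have "[int (2*p-2*j) = - int (2*j)] (mod int p)"
  proof -
    have "int (2*p-2*j) = 2 * int p - int (2*j)" using j2 by simp
    then show ?thesis unfolding cong_iff_dvd_diff by simp
  qed
  ultimately have f2: "[fact (2*j-p) * fact (2*p-2*j) = - int (2*j)] (mod int p)"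
    by (metis (no_types, lifting) cong_trans mult.left_commute mult.right_neutral)
  have "[V = (- fact (2*j-p)) * fact (2*p-2*j)] (mod int p)" unfolding V_def by (intro cong_mult c2 c4)
  then have cV: "[V = int (2*j)] (mod int p)" using f2
    by (metis cong_minus_minus_iff cong_trans mult_minus_left minus_minus)
  have "[int j * V - 2 * W = int j * int (2*j) - 2 * (int j)^2] (mod int p)"
    by (intro cong_diff cong_mult cong_refl cV cW)
  moreover have "int j * int (2*j) - 2 * (int j)^2 = 0" by (simp add: power2_eq_square)
  ultimately have "[int j * V - 2 * W = 0] (mod int p)" by metis
  then have "int p dvd (int j * V - 2 * W)" by (simp only: cong_0_iff)
  then have "(int p)^2 dvd (int j * int A * int B - 2 * int p * D)"
    by (rule generic_div[OF pr Wnd main])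
  then show ?thesis unfolding A_def B_def C1_def C2_def D_def by (simp add: mult.assoc)
qed

theorem mainTheorem3:
  fixes p n k j :: nat
  assumes "prime p" and "p \<ge> 5" and "n > k"
  shows "(1 \<le> j \<and> j \<le> (p - 1) div 2 \<longrightarrow>
           rat_cong
             (of_nat ((2*k*p + 2*j) choose (k*p + j)) * of_nat ((2*n*p - 2*k*p - 2*j) choose (n*p - k*p - j)))
             (2 * of_nat p / of_nat j * of_nat ((2*k) choose k) * of_nat ((2*n - 2*k - 2) choose (n - k - 1))
                * (2 * of_nat k + 1 - 2 * of_nat n))
             (int p) 2)
       \<and> ((p + 1) div 2 \<le> j \<and> j \<le> p - 1 \<longrightarrow>
           rat_cong
             (of_nat ((2*k*p + 2*j) choose (k*p + j)) * of_nat ((2*n*p - 2*k*p - 2*j) choose (n*p - k*p - j)))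
             (2 * of_nat p / of_nat j * of_nat ((2*k) choose k) * of_nat ((2*n - 2*k - 2) choose (n - k - 1))
                * (2 * of_nat k + 1))
             (int p) 2)"
proof -
  obtain q where n: "n = Suc (k + q)" using assms(3) less_imp_Suc_add by blast
  have pr: "prime p" using assms(1) .
  have po: "odd p"
  proof
    assume "even p"
    then have "2 dvd p" by simp
    then have "p = 2" using pr by (metis prime_nat_iff numeral_eq_one_iff semiring_norm(85))
    then show False using assms(2) by simp
  qed
  obtain r where r: "p = 2*r+1" using po oddE by blast
  have np: "2*n*p = 2*k*p + 2*q*p + 2*p" "n*p = k*p + q*p + p" by (simp_all add: n algebra_simps)
  have pq: "p*(2*q+1) = 2*q*p + p" "p*q = q*p" "p*(2*q) = 2*q*p" "p*(2*k+1) = 2*k*p + p" "p*k = k*p"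
    by (simp_all add: algebra_simps)
  have ec: "2*n - 2*k - 2 = 2*q" "n - k - 1 = q" using n by simp_all
  show ?thesis
  proof (intro conjI impI)
    assume h: "1 \<le> j \<and> j \<le> (p - 1) div 2"
    then have j1: "1 \<le> j" and j2: "2*j < p" using r by auto
    have g1: "N = K + Q + 2*p \<Longrightarrow> N - K - 2*j = (p-2*j) + (Q+p)" for N K Q :: nat using j2 by linarith
    have g2: "N = K + Q + p \<Longrightarrow> N - K - j = (p-j) + Q" for N K Q :: nat using j2 by linarith
    have e1: "2*n*p - 2*k*p - 2*j = (p-2*j) + p*(2*q+1)" unfolding pq(1) by (rule g1[OF np(1)])
    have e2: "n*p - k*p - j = (p-j) + p*q" unfolding pq(2) by (rule g2[OF np(2)])
    have d: "(int p)^2 dvd int j * (int ((2*k*p+2*j) choose (k*p+j)) * int (((p-2*j) + p*(2*q+1)) choose ((p-j)+p*q)))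
           - (-2) * int p * (int ((2*k) choose k) * int ((2*q) choose q) * int (2*q+1))"
      by (rule case1[OF pr j1 j2])
    have j0: "0 < j" "j < p" using j1 j2 by simp_all
    note g = rat_generic[OF pr j0 d]
    have eqL: "(of_int (int ((2*k*p+2*j) choose (k*p+j)) * int (((p-2*j) + p*(2*q+1)) choose ((p-j)+p*q))) :: rat)
       = of_nat ((2*k*p + 2*j) choose (k*p + j)) * of_nat ((2*n*p - 2*k*p - 2*j) choose (n*p - k*p - j))"
      unfolding e1 e2 by simp
    have eqR: "(of_int (-2) * of_nat p / of_nat j * of_int (int ((2*k) choose k) * int ((2*q) choose q) * int (2*q+1)) :: rat)
       = 2 * of_nat p / of_nat j * of_nat ((2*k) choose k) * of_nat ((2*n - 2*k - 2) choose (n - k - 1))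
                * (2 * of_nat k + 1 - 2 * of_nat n)"
      using j0 unfolding ec by (simp add: n field_simps)
    show "rat_cong
             (of_nat ((2*k*p + 2*j) choose (k*p + j)) * of_nat ((2*n*p - 2*k*p - 2*j) choose (n*p - k*p - j)))
             (2 * of_nat p / of_nat j * of_nat ((2*k) choose k) * of_nat ((2*n - 2*k - 2) choose (n - k - 1))
                * (2 * of_nat k + 1 - 2 * of_nat n))
             (int p) 2"
      using g unfolding eqL eqR .
  next
    assume h: "(p + 1) div 2 \<le> j \<and> j \<le> p - 1"
    then have j1: "p < 2*j" and j2: "j < p" using r by auto
    have g0: "2*j + K = (2*j-p) + (K+p)" for K :: nat using j1 by linarith
    have g1: "N = K + Q + 2*p \<Longrightarrow> N - K - 2*j = (2*p-2*j) + Q" for N K Q :: nat using j2 by linarith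
    have g2: "N = K + Q + p \<Longrightarrow> N - K - j = (p-j) + Q" for N K Q :: nat using j2 by linarith
    have e0: "2*k*p + 2*j = (2*j-p) + p*(2*k+1)" "k*p + j = j + p*k"
      unfolding pq(4,5) using g0[of "2*k*p"] by (simp_all add: add.commute)
    have e1: "2*n*p - 2*k*p - 2*j = (2*p-2*j) + p*(2*q)" unfolding pq(3) by (rule g1[OF np(1)])
    have e2: "n*p - k*p - j = (p-j) + p*q" unfolding pq(2) by (rule g2[OF np(2)])
    have d: "(int p)^2 dvd int j * (int (((2*j-p) + p*(2*k+1)) choose (j+p*k)) * int (((2*p-2*j) + p*(2*q)) choose ((p-j)+p*q)))
           - 2 * int p * (int ((2*k) choose k) * int ((2*q) choose q) * int (2*k+1))"
      by (rule case2[OF pr po j1 j2])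
    have j0: "0 < j" "j < p" using j1 j2 by simp_all
    note g = rat_generic[OF pr j0 d]
    have eqL: "(of_int (int (((2*j-p) + p*(2*k+1)) choose (j+p*k)) * int (((2*p-2*j) + p*(2*q)) choose ((p-j)+p*q))) :: rat)
       = of_nat ((2*k*p + 2*j) choose (k*p + j)) * of_nat ((2*n*p - 2*k*p - 2*j) choose (n*p - k*p - j))"
      unfolding e0 e1 e2 by simp
    have eqR: "(of_int 2 * of_nat p / of_nat j * of_int (int ((2*k) choose k) * int ((2*q) choose q) * int (2*k+1)) :: rat)
       = 2 * of_nat p / of_nat j * of_nat ((2*k) choose k) * of_nat ((2*n - 2*k - 2) choose (n - k - 1))
                * (2 * of_nat k + 1)"
      using j0 unfolding ec by (simp add: field_simps)
    show "rat_cong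
             (of_nat ((2*k*p + 2*j) choose (k*p + j)) * of_nat ((2*n*p - 2*k*p - 2*j) choose (n*p - k*p - j)))
             (2 * of_nat p / of_nat j * of_nat ((2*k) choose k) * of_nat ((2*n - 2*k - 2) choose (n - k - 1))
                * (2 * of_nat k + 1))
             (int p) 2"
      using g unfolding eqL eqR .
  qed
qed

end
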